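(* Let $0\le q\in L_1^{loc}(\mathbb{R})$ and suppose $q=q_1+q_2$ on $\mathbb{R}$, where $q_1>0$ is absolutely continuous and $q_2\in L_1^{loc}(\mathbb{R})$. Suppose there is a continuous function $s>0$ on $\mathbb{R}$ such that: (a) $s(x)\to\infty$ as $|x|\to\infty$; (b) $\frac{1}{s(x)}\ge\frac{|q_1'(x)|}{q_1(x)^2}$ for all $|x|$ sufficiently large; (c) $\lim_{|x|\to\infty}\frac{s(x)}{x\,q_1(x)}=0$; (d) for some $\nu\in[1,\infty)$, $\frac1\nu\le\frac{s(t)}{s(x)}\le\nu$ for all $t\in\Delta(x)$ and all $|x|$ sufficiently large, where $\Delta(x)=\big[x-\frac{s(x)}{q_1(x)},\,x+\frac{s(x)}{q_1(x)}\big]$; (e) $\varkappa_0:=\sup_{x\in\mathbb{R}}\tilde\varkappa(x)<\infty$, where $\tilde\varkappa(x)=\sup_{t\in\Delta(x)}|\varkappa_x(t)|$ and $\varkappa_x(t)=q_1(t)\int_x^t\frac{q_2(\xi)}{q_1(\xi)}d\xi$ for $t\in\Delta(x)$. Then, with $J(x)=\int_x^\infty\exp\big(-\int_x^t q(\xi)\,d\xi\big)\,dt$, there is a constant $c\in(0,\infty)$ such that $$\frac{c^{-1}}{q_1(x)}\le J(x)\le\frac{c}{q_1(x)},\quad x\in\mathbb{R}.$$ *)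

theory Defs
  imports "HOL-Analysis.Analysis"
begin

definition abs_cont_on :: "(real \<Rightarrow> real) \<Rightarrow> real \<Rightarrow> real \<Rightarrow> bool" where
  "abs_cont_on f a b \<longleftrightarrow>
     (\<forall>\<epsilon>>0. \<exists>\<delta>>0. \<forall>(n::nat) (u::nat \<Rightarrow> real) (v::nat \<Rightarrow> real).
        (\<forall>i<n. a \<le> u i \<and> u i \<le> v i \<and> v i \<le> b) \<and>
        (\<forall>i<n. \<forall>j<n. i \<noteq> j \<longrightarrow> v i \<le> u j \<or> v j \<le> u i) \<and>
        (\<Sum>i<n. v i - u i) < \<delta>
        \<longrightarrow> (\<Sum>i<n. \<bar>f (v i) - f (u i)\<bar>) < \<epsilon>)"

definition loc_abs_cont :: "(real \<Rightarrow> real) \<Rightarrow> bool" where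
  "loc_abs_cont f \<longleftrightarrow> (\<forall>a b. abs_cont_on f a b)"

definition loc_integrable :: "(real \<Rightarrow> real) \<Rightarrow> bool" where
  "loc_integrable f \<longleftrightarrow> (\<forall>a b. set_integrable lborel {a..b} f)"

definition Delta :: "(real \<Rightarrow> real) \<Rightarrow> (real \<Rightarrow> real) \<Rightarrow> real \<Rightarrow> real set" where
  "Delta s q1 x = {x - s x / q1 x .. x + s x / q1 x}"

definition J :: "(real \<Rightarrow> real) \<Rightarrow> real \<Rightarrow> ennreal" where
  "J q x = (\<integral>\<^sup>+ t. indicator {x..} t * ennreal (exp (- (LBINT \<xi>=x..t. q \<xi>))) \<partial>lborel)"

end

theory Submission
  imports Defs
begin


lemma ac_one_sided:
  fixes g g' :: "real \<Rightarrow> real"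
  assumes ac: "abs_cont_on g a b" and ab: "a \<le> b" and N: "N \<in> null_sets lborel"
    and der: "\<And>x. x \<in> {a..b} \<Longrightarrow> x \<notin> N \<Longrightarrow> (g has_real_derivative g' x) (at x)"
    and bd: "\<And>x. x \<in> {a..b} \<Longrightarrow> x \<notin> N \<Longrightarrow> g' x \<le> M" and M: "0 \<le> M"
  shows "g b - g a \<le> M * (b - a)"
proof -
  have main: "g b - g a \<le> M*(b-a) + e*(b - a + 1)" if e: "e > 0" for e
  proof -
    from ac e obtain \<delta> where \<delta>: "\<delta> > 0" and h\<delta>: "\<forall>(n::nat) (u::nat \<Rightarrow> real) (v::nat \<Rightarrow> real).
        (\<forall>i<n. a \<le> u i \<and> u i \<le> v i \<and> v i \<le> b) \<and>
        (\<forall>i<n. \<forall>j<n. i \<noteq> j \<longrightarrow> v i \<le> u j \<or> v j \<le> u i) \<and>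
        (\<Sum>i<n. v i - u i) < \<delta>
        \<longrightarrow> (\<Sum>i<n. \<bar>g (v i) - g (u i)\<bar>) < e" unfolding abs_cont_on_def by blast
    have NL: "N \<in> null_sets lebesgue" using N by (simp add: null_sets_completionI)
    then have "N \<in> sets lebesgue" by auto
    then obtain U where U: "open U" "N \<subseteq> U" "U - N \<in> lmeasurable" "emeasure lebesgue (U - N) < ennreal \<delta>"
      using sets_lebesgue_outer_open \<delta> by metis
    have UN: "U = (U - N) \<union> N" using U by auto
    have Ufm: "U \<in> lmeasurable"
      using U(3) fmeasurableI_null_sets[OF NL] UN by (metis fmeasurable.Un)
    have mUN: "measure lebesgue (U - N) < \<delta>"
      using U(3,4) \<delta> by (simp add: emeasure_eq_measure2 ennreal_less_iff)
    have "measure lebesgue U \<le> measure lebesgue (U - N) + measure lebesgue N"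
      by (metis UN fmeasurableI_null_sets[OF NL] U(3) measure_Un_le fmeasurable_def mem_Collect_eq sets.Un) 
    then have mU: "measure lebesgue U < \<delta>" using mUN NL by (simp add: measure_eq_0_null_sets)
    define P where "P t \<longleftrightarrow> a \<le> t \<and> (\<exists>(n::nat) (u::nat \<Rightarrow> real) (v::nat \<Rightarrow> real). (\<forall>i<n. a \<le> u i \<and> u i \<le> v i \<and> v i \<le> t \<and> {u i..v i} \<subseteq> U) \<and>
         (\<forall>i<n. \<forall>j<n. i \<noteq> j \<longrightarrow> v i \<le> u j \<or> v j \<le> u i) \<and>
         g t - g a \<le> (M+e)*(t-a) + (\<Sum>i<n. \<bar>g (v i) - g (u i)\<bar>))" for t
    have ext: "P t'" if "P t" "t \<le> t'" "{t..t'} \<subseteq> U" for t t'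
    proof -
      from \<open>P t\<close> obtain n :: nat and u v :: "nat \<Rightarrow> real" where ta: "a \<le> t" and 1: "\<forall>i<n. a \<le> u i \<and> u i \<le> v i \<and> v i \<le> t \<and> {u i..v i} \<subseteq> U"
        and 2: "\<forall>i<n. \<forall>j<n. i \<noteq> j \<longrightarrow> v i \<le> u j \<or> v j \<le> u i"
        and 3: "g t - g a \<le> (M+e)*(t-a) + (\<Sum>i<n. \<bar>g (v i) - g (u i)\<bar>)"
        unfolding P_def by blast
      define u' where "u' = u(n := t)"
      define v' where "v' = v(n := t')"
      have s: "(\<Sum>i<Suc n. \<bar>g (v' i) - g (u' i)\<bar>) = (\<Sum>i<n. \<bar>g (v i) - g (u i)\<bar>) + \<bar>g t' - g t\<bar>"
        by (simp add: u'_def v'_def)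
      have "(M+e)*(t-a) \<le> (M+e)*(t'-a)" using M e that(2) by (intro mult_left_mono) auto
      then have "g t' - g a \<le> (M+e)*(t'-a) + (\<Sum>i<Suc n. \<bar>g (v' i) - g (u' i)\<bar>)"
        using 3 s by linarith
      moreover have "\<forall>i<Suc n. a \<le> u' i \<and> u' i \<le> v' i \<and> v' i \<le> t' \<and> {u' i..v' i} \<subseteq> U"
        using 1 ta that(2,3) unfolding u'_def v'_def by (auto simp: less_Suc_eq)
      moreover have "\<forall>i<Suc n. \<forall>j<Suc n. i \<noteq> j \<longrightarrow> v' i \<le> u' j \<or> v' j \<le> u' i"
        using 1 2 unfolding u'_def v'_def by (auto simp: less_Suc_eq)
      ultimately show ?thesis unfolding P_def using ta that(2) by (intro conjI) (linarith, blast)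
    qed
    have ext2: "P t'" if "P t" "t \<le> t'" "g t' - g t \<le> (M+e)*(t'-t)" for t t'
    proof -
      from \<open>P t\<close> obtain n :: nat and u v :: "nat \<Rightarrow> real" where ta: "a \<le> t" and 1: "\<forall>i<n. a \<le> u i \<and> u i \<le> v i \<and> v i \<le> t \<and> {u i..v i} \<subseteq> U"
        and 2: "\<forall>i<n. \<forall>j<n. i \<noteq> j \<longrightarrow> v i \<le> u j \<or> v j \<le> u i"
        and 3: "g t - g a \<le> (M+e)*(t-a) + (\<Sum>i<n. \<bar>g (v i) - g (u i)\<bar>)"
        unfolding P_def by blast
      have "g t' - g a \<le> (M+e)*(t'-a) + (\<Sum>i<n. \<bar>g (v i) - g (u i)\<bar>)"
        using 3 that(3) by (simp add: algebra_simps)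
      moreover have "\<forall>i<n. a \<le> u i \<and> u i \<le> v i \<and> v i \<le> t' \<and> {u i..v i} \<subseteq> U"
        using 1 that(2) by (meson order_trans)
      ultimately show ?thesis unfolding P_def using ta that(2) 2 by (intro conjI) (linarith, blast)
    qed
    have locder: "\<exists>\<eta>>0. \<forall>y. \<bar>y - x\<bar> < \<eta> \<longrightarrow> (y \<le> x \<longrightarrow> g x - g y \<le> (M+e)*(x-y)) \<and> (x \<le> y \<longrightarrow> g y - g x \<le> (M+e)*(y-x))"
      if "x \<in> {a..b}" "x \<notin> N" for x
    proof -
      have "(g has_derivative (*) (g' x)) (at x)" using der[OF that] by (simp add: has_field_derivative_def)
      then obtain \<eta> where \<eta>: "\<eta> > 0" and h: "\<And>y. norm (y - x) < \<eta> \<Longrightarrow> norm (g y - g x - g' x * (y - x)) \<le> e * norm (y - x)"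
        unfolding has_derivative_at_alt using e by meson
      have gx: "g' x \<le> M" using bd[OF that] .
      show ?thesis
      proof (intro exI[of _ \<eta>] conjI allI impI \<eta>)
        fix y assume y: "\<bar>y - x\<bar> < \<eta>" "y \<le> x"
        have "\<bar>g y - g x - g' x * (y - x)\<bar> \<le> e * (x - y)" using h[of y] y by auto
        moreover have "g' x * (x - y) \<le> M * (x - y)" using gx y by (intro mult_right_mono) auto
        ultimately show "g x - g y \<le> (M+e)*(x-y)" by (simp add: algebra_simps abs_le_iff)
      next
        fix y assume y: "\<bar>y - x\<bar> < \<eta>" "x \<le> y"
        have "\<bar>g y - g x - g' x * (y - x)\<bar> \<le> e * (y - x)" using h[of y] y by auto
        moreover have "g' x * (y - x) \<le> M * (y - x)" using gx y by (intro mult_right_mono) auto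
        ultimately show "g y - g x \<le> (M+e)*(y-x)" by (simp add: algebra_simps abs_le_iff)
      qed
    qed
    define S where "S = {t\<in>{a..b}. P t}"
    have Pa: "P a" unfolding P_def by (rule conjI, simp, rule exI[of _ 0]) simp
    have aS: "a \<in> S" using Pa ab by (simp add: S_def)
    have bdd: "bdd_above S" unfolding S_def by (rule bdd_aboveI[of _ b]) auto
    define c where "c = Sup S"
    have Sne: "S \<noteq> {}" using aS by auto
    have ac': "a \<le> c" unfolding c_def using aS bdd by (simp add: cSup_upper)
    have cb: "c \<le> b" unfolding c_def using Sne by (rule cSup_least) (auto simp: S_def)
    have near: "\<exists>t\<in>S. c - \<eta> < t \<and> t \<le> c" if "\<eta> > 0" for \<eta>
    proof -
      have "c - \<eta> < Sup S" using that c_def by simp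
      then obtain t where "t \<in> S" "c - \<eta> < t" using less_cSup_iff[OF Sne bdd] by blast
      then show ?thesis using cSup_upper[OF _ bdd] c_def by blast
    qed
    have Pc: "P c"
    proof (cases "c \<in> N")
      case True
      then obtain \<eta> where \<eta>: "\<eta> > 0" "ball c \<eta> \<subseteq> U" using U(1,2) by (meson openE subsetD)
      obtain t where t: "t \<in> S" "c - \<eta> < t" "t \<le> c" using near[OF \<eta>(1)] by blast
      have "{t..c} \<subseteq> ball c \<eta>" using t by (auto simp: dist_real_def)
      then have "{t..c} \<subseteq> U" using \<eta>(2) by blast
      then show ?thesis using ext[of t c] t by (auto simp: S_def)
    next
      case False
      obtain \<eta> where \<eta>: "\<eta> > 0" and h: "\<forall>y. \<bar>y - c\<bar> < \<eta> \<longrightarrow> (y \<le> c \<longrightarrow> g c - g y \<le> (M+e)*(c-y))"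
        using locder[of c] False ac' cb by auto
      obtain t where t: "t \<in> S" "c - \<eta> < t" "t \<le> c" using near[OF \<eta>] by blast
      then show ?thesis using ext2[of t c] h by (auto simp: S_def)
    qed
    have cb2: "c = b"
    proof (rule ccontr)
      assume "c \<noteq> b"
      then have cb': "c < b" using cb by simp
      have "\<exists>t'. c < t' \<and> t' \<le> b \<and> P t'"
      proof (cases "c \<in> N")
        case True
        then obtain \<eta> where \<eta>: "\<eta> > 0" "ball c \<eta> \<subseteq> U" using U(1,2) by (meson openE subsetD)
        define t' where "t' = min b (c + \<eta>/2)"
        have "{c..t'} \<subseteq> ball c \<eta>" using \<eta> by (auto simp: dist_real_def t'_def)
        then have "{c..t'} \<subseteq> U" using \<eta>(2) by blast
        then have "P t'" using ext[OF Pc] cb' \<eta> by (simp add: t'_def)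
        then show ?thesis using cb' \<eta> by (intro exI[of _ t']) (auto simp: t'_def)
      next
        case False
        obtain \<eta> where \<eta>: "\<eta> > 0" and h: "\<forall>y. \<bar>y - c\<bar> < \<eta> \<longrightarrow> (c \<le> y \<longrightarrow> g y - g c \<le> (M+e)*(y-c))"
          using locder[of c] False ac' cb by auto
        define t' where "t' = min b (c + \<eta>/2)"
        have "P t'" using ext2[OF Pc, of t'] h cb' \<eta> by (auto simp: t'_def)
        then show ?thesis using cb' \<eta> by (intro exI[of _ t']) (auto simp: t'_def)
      qed
      then obtain t' where "c < t'" "t' \<le> b" "P t'" by blast
      moreover have "a \<le> t'" using ac' \<open>c < t'\<close> by simp
      ultimately have "t' \<in> S" by (simp add: S_def)
      then have "t' \<le> c" unfolding c_def using bdd by (simp add: cSup_upper)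
      then show False using \<open>c < t'\<close> by simp
    qed
    from Pc cb2 obtain n :: nat and u v :: "nat \<Rightarrow> real" where 1: "\<forall>i<n. a \<le> u i \<and> u i \<le> v i \<and> v i \<le> b \<and> {u i..v i} \<subseteq> U"
        and 2: "\<forall>i<n. \<forall>j<n. i \<noteq> j \<longrightarrow> v i \<le> u j \<or> v j \<le> u i"
        and 3: "g b - g a \<le> (M+e)*(b-a) + (\<Sum>i<n. \<bar>g (v i) - g (u i)\<bar>)"
      unfolding P_def by blast
    have "measure lebesgue (\<Union>i\<in>{..<n}. {u i..v i}) = (\<Sum>i<n. measure lebesgue {u i..v i})"
    proof (rule measure_negligible_finite_Union_image)
      show "pairwise (\<lambda>i j. negligible ({u i..v i} \<inter> {u j..v j})) {..<n}"
      unfolding pairwise_def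
      proof (intro ballI impI)
        fix i j assume ij: "i \<in> {..<n}" "j \<in> {..<n}" "i \<noteq> j"
        then consider "v i \<le> u j" | "v j \<le> u i" using 2 by blast
        then show "negligible ({u i..v i} \<inter> {u j..v j})"
        proof cases
          case 1
          then have "{u i..v i} \<inter> {u j..v j} \<subseteq> {v i}" by (intro subsetI) simp
          then show ?thesis using negligible_subset negligible_sing by blast
        next
          case 2
          then have "{u i..v i} \<inter> {u j..v j} \<subseteq> {v j}" by (intro subsetI) simp
          then show ?thesis using negligible_subset negligible_sing by blast
        qed
      qed
    qed auto
    also have "\<dots> = (\<Sum>i<n. v i - u i)" using 1 by (intro sum.cong) auto
    finally have eqm: "measure lebesgue (\<Union>i\<in>{..<n}. {u i..v i}) = (\<Sum>i<n. v i - u i)" .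
    have "measure lebesgue (\<Union>i\<in>{..<n}. {u i..v i}) \<le> measure lebesgue U"
      using 1 Ufm by (intro measure_mono_fmeasurable) auto
    then have "(\<Sum>i<n. v i - u i) < \<delta>" using eqm mU by linarith
    then have "(\<Sum>i<n. \<bar>g (v i) - g (u i)\<bar>) < e" using h\<delta>[rule_format, of n u v] 1 2 by blast
    then show ?thesis using 3 by (simp add: algebra_simps)
  qed
  show ?thesis
  proof (rule field_le_epsilon)
    fix e :: real assume "e > 0"
    have "g b - g a \<le> M*(b-a) + (e/(b-a+1))*(b - a + 1)" using main[of "e/(b-a+1)"] \<open>e>0\<close> ab by simp
    then show "g b - g a \<le> M * (b - a) + e" using ab by simp
  qed
qed


lemma ac_neg: "abs_cont_on (\<lambda>x. - g x) a b \<longleftrightarrow> abs_cont_on g a b"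
  unfolding abs_cont_on_def by (simp add: abs_minus_commute)

lemma ac_cont_at:
  assumes "loc_abs_cont f" shows "isCont f x"
  unfolding continuous_at_eps_delta
proof (intro allI impI)
  fix e :: real assume e: "e > 0"
  from assms e obtain \<delta> where \<delta>: "\<delta> > 0" and h: "\<forall>(n::nat) (u::nat \<Rightarrow> real) (v::nat \<Rightarrow> real).
        (\<forall>i<n. x - 1 \<le> u i \<and> u i \<le> v i \<and> v i \<le> x + 1) \<and>
        (\<forall>i<n. \<forall>j<n. i \<noteq> j \<longrightarrow> v i \<le> u j \<or> v j \<le> u i) \<and>
        (\<Sum>i<n. v i - u i) < \<delta>
        \<longrightarrow> (\<Sum>i<n. \<bar>f (v i) - f (u i)\<bar>) < e"
    unfolding loc_abs_cont_def abs_cont_on_def by blast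
  show "\<exists>d>0. \<forall>x'. dist x' x < d \<longrightarrow> dist (f x') (f x) < e"
  proof (intro exI[of _ "min \<delta> 1"] conjI allI impI)
    fix y assume y: "dist y x < min \<delta> 1"
    have hh: "\<bar>f (max x y) - f (min x y)\<bar> < e"
    proof (cases "x \<le> y")
      case True
      then show ?thesis using h[rule_format, of "Suc 0" "\<lambda>_. x" "\<lambda>_. y"] y by (auto simp: dist_real_def)
    next
      case False
      then show ?thesis using h[rule_format, of "Suc 0" "\<lambda>_. y" "\<lambda>_. x"] y by (auto simp: dist_real_def)
    qed
    then show "dist (f y) (f x) < e"
      by (cases "x \<le> y") (auto simp: dist_real_def max_def min_def abs_minus_commute)
  qed (use \<delta> in simp)
qed

lemma ac_cont: "loc_abs_cont f \<Longrightarrow> continuous_on UNIV f"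
  using ac_cont_at continuous_at_imp_continuous_on by blast

lemma ac_inv:
  assumes ac: "abs_cont_on f a b" and m: "m > 0" and fm: "\<And>x. x \<in> {a..b} \<Longrightarrow> m \<le> f x"
  shows "abs_cont_on (\<lambda>x. 1 / f x) a b"
  unfolding abs_cont_on_def
proof (intro allI impI)
  fix e :: real assume e: "e > 0"
  have em: "e * m^2 > 0" using e m by simp
  from ac em obtain \<delta> where \<delta>: "\<delta> > 0" and h: "\<forall>(n::nat) (u::nat \<Rightarrow> real) (v::nat \<Rightarrow> real).
        (\<forall>i<n. a \<le> u i \<and> u i \<le> v i \<and> v i \<le> b) \<and>
        (\<forall>i<n. \<forall>j<n. i \<noteq> j \<longrightarrow> v i \<le> u j \<or> v j \<le> u i) \<and>
        (\<Sum>i<n. v i - u i) < \<delta>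
        \<longrightarrow> (\<Sum>i<n. \<bar>f (v i) - f (u i)\<bar>) < e * m^2"
    unfolding abs_cont_on_def by blast
  show "\<exists>\<delta>>0. \<forall>(n::nat) (u::nat \<Rightarrow> real) (v::nat \<Rightarrow> real).
        (\<forall>i<n. a \<le> u i \<and> u i \<le> v i \<and> v i \<le> b) \<and>
        (\<forall>i<n. \<forall>j<n. i \<noteq> j \<longrightarrow> v i \<le> u j \<or> v j \<le> u i) \<and>
        (\<Sum>i<n. v i - u i) < \<delta>
        \<longrightarrow> (\<Sum>i<n. \<bar>1 / f (v i) - 1 / f (u i)\<bar>) < e"
  proof (intro exI[of _ \<delta>] conjI allI impI \<delta>)
    fix n :: nat and u v :: "nat \<Rightarrow> real"
    assume H: "(\<forall>i<n. a \<le> u i \<and> u i \<le> v i \<and> v i \<le> b) \<and>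
        (\<forall>i<n. \<forall>j<n. i \<noteq> j \<longrightarrow> v i \<le> u j \<or> v j \<le> u i) \<and> (\<Sum>i<n. v i - u i) < \<delta>"
    have 1: "(\<Sum>i<n. \<bar>f (v i) - f (u i)\<bar>) < e * m^2" using h[rule_format, of n u v] H by blast
    have "\<bar>1 / f (v i) - 1 / f (u i)\<bar> \<le> \<bar>f (v i) - f (u i)\<bar> / m^2" if i: "i < n" for i
    proof -
      have fu: "m \<le> f (u i)" and fv: "m \<le> f (v i)" using H i fm by auto
      have pos: "0 < f (u i)" "0 < f (v i)" using fu fv m by auto
      have "1 / f (v i) - 1 / f (u i) = (f (u i) - f (v i)) / (f (u i) * f (v i))"
        using pos by (simp add: diff_divide_distrib)
      then have "\<bar>1 / f (v i) - 1 / f (u i)\<bar> = \<bar>f (u i) - f (v i)\<bar> / (f (u i) * f (v i))"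
        using pos by (simp add: abs_divide abs_mult)
      also have "\<dots> = \<bar>f (v i) - f (u i)\<bar> / (f (u i) * f (v i))" by (simp add: abs_minus_commute)
      finally have eq: "\<bar>1 / f (v i) - 1 / f (u i)\<bar> = \<bar>f (v i) - f (u i)\<bar> / (f (u i) * f (v i))" .
      have "m^2 \<le> f (u i) * f (v i)" using fu fv m by (simp add: power2_eq_square mult_mono)
      then have "\<bar>f (v i) - f (u i)\<bar> / (f (u i) * f (v i)) \<le> \<bar>f (v i) - f (u i)\<bar> / m^2"
        using m pos by (intro divide_left_mono) auto
      then show ?thesis using eq by simp
    qed
    then have "(\<Sum>i<n. \<bar>1 / f (v i) - 1 / f (u i)\<bar>) \<le> (\<Sum>i<n. \<bar>f (v i) - f (u i)\<bar> / m^2)"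
      by (intro sum_mono) auto
    also have "\<dots> = (\<Sum>i<n. \<bar>f (v i) - f (u i)\<bar>) / m^2" by (simp add: sum_divide_distrib)
    also have "\<dots> < e" using 1 m by (simp add: divide_less_eq)
    finally show "(\<Sum>i<n. \<bar>1 / f (v i) - 1 / f (u i)\<bar>) < e" .
  qed
qed

lemma li_integrable_on: "loc_integrable f \<Longrightarrow> f integrable_on {a..b}"
  unfolding loc_integrable_def using set_borel_integral_eq_integral(1) by blast

lemma li_LBINT: "loc_integrable f \<Longrightarrow> a \<le> b \<Longrightarrow> (LBINT x=a..b. f x) = integral {a..b} f"
  unfolding loc_integrable_def using set_borel_integral_eq_integral(2) interval_integral_Icc by metis

lemma div_integrable:
  assumes q2: "loc_integrable q2" and c: "continuous_on UNIV q1" and pos: "\<And>x. q1 x > 0"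
  shows "set_integrable lborel {a..b} (\<lambda>x. q2 x / q1 x)"
proof (cases "a \<le> b")
  case False
  then show ?thesis by (simp add: set_integrable_def)
next
  case True
  obtain x0 where x0: "x0 \<in> {a..b}" "\<forall>y\<in>{a..b}. q1 x0 \<le> q1 y"
    using continuous_attains_inf[of "{a..b}" q1] True continuous_on_subset[OF c] by auto
  define m where "m = q1 x0"
  have m: "m > 0" using pos m_def by simp
  have I: "integrable lborel (\<lambda>x. indicator {a..b} x *\<^sub>R q2 x)"
    using q2 unfolding loc_integrable_def set_integrable_def by blast
  have c': "continuous_on UNIV (\<lambda>x. 1 / q1 x)"
  proof -
    have "\<forall>x. q1 x \<noteq> 0" using pos by (metis less_irrefl)
    then show ?thesis using c by (intro continuous_intros) auto
  qed
  have meas: "(\<lambda>x. indicator {a..b} x *\<^sub>R (q2 x / q1 x)) \<in> borel_measurable lborel"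
  proof -
    have "(\<lambda>x. (indicator {a..b} x *\<^sub>R q2 x) * (1 / q1 x)) \<in> borel_measurable lborel"
    proof (rule borel_measurable_times)
      show "(\<lambda>x. indicator {a..b} x *\<^sub>R q2 x) \<in> borel_measurable lborel"
        using borel_measurable_integrable[OF I] .
      show "(\<lambda>x. 1 / q1 x) \<in> borel_measurable lborel"
        using borel_measurable_continuous_onI[OF c'] by (simp add: measurable_lborel1)
    qed
    moreover have "(\<lambda>x. (indicator {a..b} x *\<^sub>R q2 x) * (1 / q1 x)) = (\<lambda>x. indicator {a..b} x *\<^sub>R (q2 x / q1 x))"
      by (auto simp: fun_eq_iff)
    ultimately show ?thesis by simp
  qed
  show ?thesis
    unfolding set_integrable_def
  proof (rule Bochner_Integration.integrable_bound[OF integrable_mult_right[OF I, of "1/m"] meas])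
    show "AE x in lborel. norm (indicator {a..b} x *\<^sub>R (q2 x / q1 x)) \<le> norm (1 / m * (indicator {a..b} x *\<^sub>R q2 x))"
    proof (rule AE_I2)
      fix x
      show "norm (indicator {a..b} x *\<^sub>R (q2 x / q1 x)) \<le> norm (1 / m * (indicator {a..b} x *\<^sub>R q2 x))"
      proof (cases "x \<in> {a..b}")
        case True
        then have "m \<le> q1 x" using x0 m_def by auto
        then have "\<bar>q2 x\<bar> / q1 x \<le> \<bar>q2 x\<bar> / m" using m by (intro divide_left_mono) auto
        have i1: "indicator {a..b} x = (1::real)" using True by simp
        have e1: "norm (indicator {a..b} x *\<^sub>R (q2 x / q1 x)) = \<bar>q2 x\<bar> / q1 x"
          using pos[of x] by (simp add: i1 abs_divide)
        have e2: "norm (1 / m * (indicator {a..b} x *\<^sub>R q2 x)) = \<bar>q2 x\<bar> / m"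
          using m by (simp add: i1 abs_mult)
        show ?thesis unfolding e1 e2 by fact
      qed simp
    qed
  qed
qed


lemma ac_abs_bound:
  fixes g g' :: "real \<Rightarrow> real"
  assumes ac: "abs_cont_on g a b" and ab: "a \<le> b" and N: "N \<in> null_sets lborel"
    and der: "\<And>x. x \<in> {a..b} \<Longrightarrow> x \<notin> N \<Longrightarrow> (g has_real_derivative g' x) (at x)"
    and bd: "\<And>x. x \<in> {a..b} \<Longrightarrow> x \<notin> N \<Longrightarrow> \<bar>g' x\<bar> \<le> M" and M: "0 \<le> M"
  shows "\<bar>g b - g a\<bar> \<le> M * (b - a)"
proof -
  have 1: "g b - g a \<le> M * (b - a)"
    using ac_one_sided[OF ac ab N der _ M] bd by (meson abs_le_D1)
  have "(\<lambda>x. - g x) b - (\<lambda>x. - g x) a \<le> M * (b - a)"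
  proof (rule ac_one_sided[OF _ ab N _ _ M, of _ "\<lambda>x. - g' x"])
    show "abs_cont_on (\<lambda>x. - g x) a b" using ac by (simp add: ac_neg)
    show "((\<lambda>x. - g x) has_real_derivative - g' x) (at x)" if "x \<in> {a..b}" "x \<notin> N" for x
      using der[OF that] by (rule DERIV_minus)
    show "- g' x \<le> M" if "x \<in> {a..b}" "x \<notin> N" for x
      using bd[OF that] by linarith
  qed
  then show ?thesis using 1 by simp
qed

lemma sup_trick:
  fixes m Z :: "real \<Rightarrow> real"
  assumes bdd: "\<And>y. y \<in> S \<Longrightarrow> m y \<le> B"
    and step: "\<And>y. y \<in> S \<Longrightarrow> m y \<le> H + Z y / 2"
    and Zb: "\<And>y. y \<in> S \<Longrightarrow> Z y \<le> C \<or> (\<exists>z\<in>S. Z y \<le> m z)"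
    and H: "0 \<le> H" and C: "0 \<le> C" and y: "y \<in> S"
  shows "m y \<le> 2 * H + C"
proof -
  define M where "M = Sup (m ` S)"
  have ne: "m ` S \<noteq> {}" using y by auto
  have bd: "bdd_above (m ` S)" using bdd by (intro bdd_aboveI[of _ B]) auto
  have le: "m z \<le> M" if "z \<in> S" for z unfolding M_def using bd that by (intro cSup_upper) auto
  have "m z \<le> H + max C M / 2" if "z \<in> S" for z
  proof -
    have "Z z \<le> max C M" using Zb[OF that] le by force
    then show ?thesis using step[OF that] by linarith
  qed
  then have "M \<le> H + max C M / 2" unfolding M_def using ne by (intro cSup_least) auto
  then have "M \<le> 2 * H + C" using H C by (cases "M \<le> C") (auto simp: max_def)
  then show ?thesis using le[OF y] by linarith
qed


theorem theorem3p1: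
  fixes q q1 q2 q1' s :: "real \<Rightarrow> real"
  assumes q_nonneg: "\<And>x. 0 \<le> q x"
    and q_loc: "loc_integrable q"
    and q_split: "\<And>x. q x = q1 x + q2 x"
    and q1_pos: "\<And>x. 0 < q1 x"
    and q1_ac: "loc_abs_cont q1"
    and q1_deriv: "AE x in lborel. (q1 has_real_derivative q1' x) (at x)"
    and q2_loc: "loc_integrable q2"
    and s_cont: "continuous_on UNIV s"
    and s_pos: "\<And>x. 0 < s x"
    and cond_a: "filterlim s at_top at_infinity"
    and cond_b: "\<forall>\<^sub>F x in at_infinity. 1 / s x \<ge> \<bar>q1' x\<bar> / (q1 x)\<^sup>2"
    and cond_c: "((\<lambda>x. s x / (x * q1 x)) \<longlongrightarrow> 0) at_infinity"
    and cond_d: "\<exists>\<nu>::real. 1 \<le> \<nu> \<and>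
        (\<forall>\<^sub>F x in at_infinity. \<forall>t\<in>Delta s q1 x. 1 / \<nu> \<le> s t / s x \<and> s t / s x \<le> \<nu>)"
    and cond_e: "\<exists>K::real. \<forall>x. \<forall>t\<in>Delta s q1 x.
        \<bar>q1 t * (LBINT \<xi>=x..t. q2 \<xi> / q1 \<xi>)\<bar> \<le> K"
  shows "\<exists>c::real. 0 < c \<and>
    (\<forall>x. ennreal (1 / (c * q1 x)) \<le> J q x \<and> J q x \<le> ennreal (c / q1 x))"
proof -
  obtain \<nu> where \<nu>1: "1 \<le> \<nu>" and ev_d: "\<forall>\<^sub>F x in at_infinity. \<forall>t\<in>Delta s q1 x. 1 / \<nu> \<le> s t / s x \<and> s t / s x \<le> \<nu>"
    using cond_d by blast
  obtain K where hK: "\<And>x t. t \<in> Delta s q1 x \<Longrightarrow> \<bar>q1 t * (LBINT \<xi>=x..t. q2 \<xi> / q1 \<xi>)\<bar> \<le> K"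
    using cond_e by blast
  have xDelta: "x \<in> Delta s q1 x" for x
    using s_pos[of x] q1_pos[of x] by (simp add: Delta_def)
  have K0: "0 \<le> K" using hK[OF xDelta[of 0]] by simp
  obtain N where N: "N \<in> null_sets lborel" and hN: "\<And>x. x \<notin> N \<Longrightarrow> (q1 has_real_derivative q1' x) (at x)"
  proof -
    from q1_deriv obtain N where sub: "{x \<in> space lborel. \<not> (q1 has_real_derivative q1' x) (at x)} \<subseteq> N"
      and e0: "emeasure lborel N = 0" and Ns: "N \<in> sets lborel"
      by (rule AE_E)
    have "N \<in> null_sets lborel" using e0 Ns by (simp add: null_sets_def)
    then show ?thesis using that sub by auto
  qed
  have q1c: "continuous_on UNIV q1" using ac_cont[OF q1_ac] .
  have q1ne: "q1 x \<noteq> 0" for x using q1_pos[of x] by simp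
  define H where "H = 3/2 * (K + 2)"
  have H3: "3 \<le> H" using K0 by (simp add: H_def)
  obtain Rb where Rb: "\<And>x. Rb \<le> \<bar>x\<bar> \<Longrightarrow> \<bar>q1' x\<bar> / (q1 x)\<^sup>2 \<le> 1 / s x"
    using cond_b unfolding eventually_at_infinity by auto
  obtain Rd where Rd: "\<And>x t. Rd \<le> \<bar>x\<bar> \<Longrightarrow> t \<in> Delta s q1 x \<Longrightarrow> 1 / \<nu> \<le> s t / s x \<and> s t / s x \<le> \<nu>"
    using ev_d unfolding eventually_at_infinity by auto
  have "\<forall>\<^sub>F x in at_infinity. dist (s x / (x * q1 x)) 0 < 1/2"
    by (rule tendstoD[OF cond_c]) simp
  then obtain Rc where Rc: "\<And>x. Rc \<le> \<bar>x\<bar> \<Longrightarrow> \<bar>s x / (x * q1 x)\<bar> < 1/2"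
    unfolding eventually_at_infinity by auto
  have "\<forall>\<^sub>F x in at_infinity. 2 * \<nu> * H \<le> s x"
    using cond_a unfolding filterlim_at_top by blast
  then obtain Ra where Ra: "\<And>x. Ra \<le> \<bar>x\<bar> \<Longrightarrow> 2 * \<nu> * H \<le> s x"
    unfolding eventually_at_infinity by auto
  define R where "R = max (max (2 * Rb) Rd) (max (max Rc Ra) 1)"
  have R1: "1 \<le> R" by (simp add: R_def)
  have comp: "2/3 * q1 x \<le> q1 t \<and> q1 t \<le> 2 * q1 x"
    if x: "R \<le> \<bar>x\<bar>" and t: "x \<le> t" "t \<le> x + H / q1 x" for x t
  proof -
    have Rle: "2 * Rb \<le> \<bar>x\<bar>" "Rd \<le> \<bar>x\<bar>" "Rc \<le> \<bar>x\<bar>" "Ra \<le> \<bar>x\<bar>" "1 \<le> \<bar>x\<bar>"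
      using x by (auto simp: R_def)
    have sx: "2 * \<nu> * H \<le> s x" using Ra[OF Rle(4)] .
    have sxp: "0 < s x" and q1x: "0 < q1 x" using s_pos q1_pos by auto
    have x0: "x \<noteq> 0" using Rle(5) by auto
    have "\<bar>s x / (x * q1 x)\<bar> < 1/2" using Rc[OF Rle(3)] .
    moreover have "\<bar>s x / (x * q1 x)\<bar> = (s x / q1 x) / \<bar>x\<bar>"
      using sxp q1x by (simp add: abs_divide abs_mult)
    ultimately have lt: "(s x / q1 x) / \<bar>x\<bar> < 1/2" by simp
    have ax: "0 < \<bar>x\<bar>" using x0 by simp
    have "s x / q1 x = ((s x / q1 x) / \<bar>x\<bar>) * \<bar>x\<bar>" using ax by simp
    also have "\<dots> \<le> (1/2) * \<bar>x\<bar>" using lt ax by (intro mult_right_mono) auto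
    finally have half: "s x / q1 x \<le> \<bar>x\<bar> / 2" by simp
    have "1 * H \<le> (2 * \<nu>) * H" using H3 \<nu>1 by (intro mult_right_mono) auto
    then have Hs: "H \<le> s x" using sx by simp
    have tD: "t \<le> x + s x / q1 x" using t(2) Hs q1x by (meson add_left_mono divide_right_mono less_le order_trans)
    have sub: "{x..t} \<subseteq> Delta s q1 x" using tD sxp q1x by (auto simp: Delta_def)
    have far: "Rb \<le> \<bar>\<xi>\<bar>" if "\<xi> \<in> {x..t}" for \<xi>
    proof -
      have xi: "x \<le> \<xi>" "\<xi> \<le> t" using that by auto
      have "0 \<le> \<xi> - x" "\<xi> - x \<le> \<bar>x\<bar> / 2" using xi tD half by linarith+
      then show ?thesis using Rle(1) by (cases "0 \<le> x"; cases "0 \<le> \<xi>"; simp; linarith)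
    qed
    have s\<xi>: "1 / s \<xi> \<le> \<nu> / s x" if "\<xi> \<in> {x..t}" for \<xi>
    proof -
      have "1 / \<nu> \<le> s \<xi> / s x" using Rd[OF Rle(2)] sub that by blast
      then have "s x \<le> \<nu> * s \<xi>" using sxp \<nu>1 by (simp add: field_simps)
      then show ?thesis using sxp s_pos[of \<xi>] \<nu>1 by (simp add: field_simps)
    qed
    obtain x0 where x0: "x0 \<in> {x..t}" "\<forall>y\<in>{x..t}. q1 x0 \<le> q1 y"
      using continuous_attains_inf[of "{x..t}" q1] t(1) continuous_on_subset[OF q1c] by auto
    have ac: "abs_cont_on (\<lambda>y. 1 / q1 y) x t"
      using ac_inv[of q1 x t "q1 x0"] q1_ac q1_pos x0 unfolding loc_abs_cont_def by blast
    have inv: "(\<lambda>y. 1 / q1 y) = (\<lambda>y. inverse (q1 y))" by (simp add: fun_eq_iff inverse_eq_divide)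
    have main: "\<bar>1 / q1 t - 1 / q1 x\<bar> \<le> \<nu> / s x * (t - x)"
    proof (rule ac_abs_bound[OF ac t(1) N])
      show "((\<lambda>y. 1 / q1 y) has_real_derivative - (q1' \<xi> * inverse (q1 \<xi> ^ Suc (Suc 0)))) (at \<xi>)"
        if "\<xi> \<in> {x..t}" "\<xi> \<notin> N" for \<xi>
        unfolding inv using DERIV_inverse_fun[OF hN[OF that(2)] q1ne] .
      show "\<bar>- (q1' \<xi> * inverse (q1 \<xi> ^ Suc (Suc 0)))\<bar> \<le> \<nu> / s x"
        if "\<xi> \<in> {x..t}" "\<xi> \<notin> N" for \<xi>
      proof -
        have "\<bar>- (q1' \<xi> * inverse (q1 \<xi> ^ Suc (Suc 0)))\<bar> = \<bar>q1' \<xi>\<bar> / (q1 \<xi>)\<^sup>2"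
          using q1_pos[of \<xi>] by (simp add: abs_mult power2_eq_square divide_inverse)
        also have "\<dots> \<le> 1 / s \<xi>" using Rb[OF far[OF that(1)]] .
        also have "\<dots> \<le> \<nu> / s x" using s\<xi>[OF that(1)] .
        finally show ?thesis .
      qed
      show "0 \<le> \<nu> / s x" using \<nu>1 sxp by simp
    qed
    have "\<nu> / s x * (t - x) \<le> \<nu> / s x * (H / q1 x)"
      using t \<nu>1 sxp by (intro mult_left_mono) auto
    also have "\<dots> = (\<nu> * H / s x) / q1 x" by simp
    also have "\<dots> \<le> (1/2) / q1 x"
      using sx sxp q1x by (intro divide_right_mono) (auto simp: divide_le_eq)
    finally have bnd: "\<bar>1 / q1 t - 1 / q1 x\<bar> \<le> (1/2) / q1 x" using main by linarith
    have q1t: "0 < q1 t" using q1_pos by auto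
    have u: "1 / q1 t \<le> (3/2) / q1 x" and l: "(1/2) / q1 x \<le> 1 / q1 t" using bnd by (auto simp: abs_le_iff)
    from u have "2 * q1 x \<le> 3 * q1 t" using q1t q1x by (simp add: field_simps)
    moreover from l have "q1 t \<le> 2 * q1 x" using q1t q1x by (simp add: field_simps)
    ultimately show ?thesis by simp
  qed
  have qI: "q integrable_on {a..b}" for a b using li_integrable_on[OF q_loc] .
  have dI: "(\<lambda>\<xi>. q2 \<xi> / q1 \<xi>) integrable_on {a..b}" for a b
    using set_borel_integral_eq_integral(1)[OF div_integrable[OF q2_loc q1c q1_pos]] .
  have dL: "(LBINT \<xi>=a..b. q2 \<xi> / q1 \<xi>) = integral {a..b} (\<lambda>\<xi>. q2 \<xi> / q1 \<xi>)" if "a \<le> b" for a b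
    using set_borel_integral_eq_integral(2)[OF div_integrable[OF q2_loc q1c q1_pos]] interval_integral_Icc[OF that]
    by metis
  have HsR: "H \<le> s x" if "R \<le> \<bar>x\<bar>" for x
  proof -
    have "Ra \<le> \<bar>x\<bar>" using that by (auto simp: R_def)
    then have sx: "2 * \<nu> * H \<le> s x" using Ra by blast
    have "1 * H \<le> (2 * \<nu>) * H" using H3 \<nu>1 by (intro mult_right_mono) auto
    then show ?thesis using sx by simp
  qed
  have intb: "2/3 * q1 x * (t - x) - K \<le> integral {x..t} q \<and> integral {x..t} q \<le> 2 * q1 x * (t - x) + 3 * K"
    if x: "R \<le> \<bar>x\<bar>" and t: "x \<le> t" "t \<le> x + H / q1 x" for x t
  proof -
    have q1x: "0 < q1 x" and q1t: "0 < q1 t" using q1_pos by auto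
    have ct: "2/3 * q1 x \<le> q1 t" using comp[OF x t] by simp
    have c\<xi>: "2/3 * q1 x \<le> q1 \<xi> \<and> q1 \<xi> \<le> 2 * q1 x" if "\<xi> \<in> {x..t}" for \<xi>
      using comp[OF x, of \<xi>] that t by auto
    have "t \<le> x + s x / q1 x" using t(2) HsR[OF x] q1x by (meson add_left_mono divide_right_mono less_le order_trans)
    then have tD: "t \<in> Delta s q1 x" using t(1) s_pos[of x] q1x by (auto simp: Delta_def)
    define F where "F = integral {x..t} (\<lambda>\<xi>. q2 \<xi> / q1 \<xi>)"
    have "\<bar>q1 t * F\<bar> \<le> K" using hK[OF tD] dL[OF t(1)] by (simp add: F_def)
    then have "q1 t * \<bar>F\<bar> \<le> K" using q1t by (simp add: abs_mult)
    then have "\<bar>F\<bar> \<le> K / q1 t" using q1t by (simp add: field_simps)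
    also have "\<dots> \<le> K / (2/3 * q1 x)" using ct K0 q1x by (intro divide_left_mono) auto
    finally have Fb: "\<bar>F\<bar> \<le> 3/2 * K / q1 x" by simp
    have eqf: "(\<lambda>\<xi>. q \<xi> / q1 \<xi>) = (\<lambda>\<xi>. 1 + q2 \<xi> / q1 \<xi>)"
      using q_split q1ne by (auto simp: fun_eq_iff add_divide_distrib)
    have GI: "(\<lambda>\<xi>. q \<xi> / q1 \<xi>) integrable_on {x..t}"
      unfolding eqf by (intro integrable_add integrable_const_ivl dI)
    have G: "integral {x..t} (\<lambda>\<xi>. q \<xi> / q1 \<xi>) = (t - x) + F"
      unfolding eqf F_def using t(1) by (simp add: integral_add[OF integrable_const_ivl dI] content_real)
    have up: "integral {x..t} q \<le> integral {x..t} (\<lambda>\<xi>. (2 * q1 x) * (q \<xi> / q1 \<xi>))"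
    proof (rule integral_le[OF qI integrable_on_mult_right[OF GI]])
      fix \<xi> assume "\<xi> \<in> {x..t}"
      then have "q1 \<xi> \<le> 2 * q1 x" using c\<xi> by blast
      then have "q1 \<xi> * (q \<xi> / q1 \<xi>) \<le> (2 * q1 x) * (q \<xi> / q1 \<xi>)"
        using q_nonneg[of \<xi>] q1_pos[of \<xi>] by (intro mult_right_mono) auto
      then show "q \<xi> \<le> (2 * q1 x) * (q \<xi> / q1 \<xi>)" using q1ne[of \<xi>] by simp
    qed
    have lo: "integral {x..t} (\<lambda>\<xi>. (2/3 * q1 x) * (q \<xi> / q1 \<xi>)) \<le> integral {x..t} q"
    proof (rule integral_le[OF integrable_on_mult_right[OF GI] qI])
      fix \<xi> assume "\<xi> \<in> {x..t}"
      then have "2/3 * q1 x \<le> q1 \<xi>" using c\<xi> by blast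
      then have "(2/3 * q1 x) * (q \<xi> / q1 \<xi>) \<le> q1 \<xi> * (q \<xi> / q1 \<xi>)"
        using q_nonneg[of \<xi>] q1_pos[of \<xi>] by (intro mult_right_mono) auto
      then show "(2/3 * q1 x) * (q \<xi> / q1 \<xi>) \<le> q \<xi>" using q1ne[of \<xi>] by simp
    qed
    have "2 * q1 x * F \<le> 2 * q1 x * (3/2 * K / q1 x)" using Fb q1x by (intro mult_left_mono) auto
    also have "\<dots> = 3 * K" using q1x by simp
    finally have A: "2 * q1 x * F \<le> 3 * K" .
    have "2/3 * q1 x * (- F) \<le> 2/3 * q1 x * (3/2 * K / q1 x)" using Fb q1x by (intro mult_left_mono) auto
    also have "\<dots> = K" using q1x by simp
    finally have B: "- (2/3 * q1 x * F) \<le> K" by simp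
    have "integral {x..t} q \<le> 2 * q1 x * (t - x) + 2 * q1 x * F"
      using up unfolding integral_mult_right G by (simp add: algebra_simps)
    moreover have "2/3 * q1 x * (t - x) + 2/3 * q1 x * F \<le> integral {x..t} q"
      using lo unfolding integral_mult_right G by (simp only: distrib_left)
    ultimately show ?thesis using A B by linarith
  qed
  define Qf where "Qf y t = integral {y..t} q" for y t
  have Qnn: "0 \<le> Qf y t" for y t unfolding Qf_def using qI q_nonneg by (intro integral_nonneg) auto
  have Qadd: "Qf y t = Qf y z + Qf z t" if "y \<le> z" "z \<le> t" for y z t
    unfolding Qf_def using Henstock_Kurzweil_Integration.integral_combine[OF that qI] by simp
  have Qmono: "Qf y t1 \<le> Qf y t2" if "y \<le> t1" "t1 \<le> t2" for y t1 t2
    using Qadd[OF that] Qnn[of t1 t2] by linarith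
  define E where "E y t = exp (- Qf y (max y t))" for y t
  have E1: "E y t \<le> 1" for y t using Qnn unfolding E_def by simp
  have E0: "0 \<le> E y t" for y t unfolding E_def by simp
  have Emeas: "(\<lambda>t. E y t) \<in> borel_measurable borel" for y
  proof -
    have "mono (\<lambda>t. - E y t)"
    proof (rule monoI)
      fix a b :: real assume "a \<le> b"
      then have "Qf y (max y a) \<le> Qf y (max y b)" by (intro Qmono) auto
      then show "- E y a \<le> - E y b" unfolding E_def by simp
    qed
    then have "(\<lambda>t. - E y t) \<in> borel_measurable borel" by (rule borel_measurable_mono)
    then have "(\<lambda>t. - (- E y t)) \<in> borel_measurable borel" by (rule borel_measurable_uminus)
    then show ?thesis by simp
  qed
  have Imeas: "(\<lambda>t. indicator A t * ennreal (E y t)) \<in> borel_measurable lborel" if "A \<in> sets borel" for A y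
  proof -
    have "(\<lambda>t. ennreal (E y t)) \<in> borel_measurable borel" using Emeas[of y] by (rule measurable_compose[OF _ measurable_ennreal])
    then show ?thesis using that by (simp add: measurable_lborel1 borel_measurable_indicator borel_measurable_times_ennreal)
  qed
  have Jeq: "J q y = (\<integral>\<^sup>+ t. indicator {y..} t * ennreal (E y t) \<partial>lborel)" for y
    unfolding J_def
  proof (rule nn_integral_cong)
    fix t show "indicator {y..} t * ennreal (exp (- (LBINT \<xi>=y..t. q \<xi>))) = indicator {y..} t * ennreal (E y t)"
      by (cases "y \<le> t") (auto simp: E_def Qf_def li_LBINT[OF q_loc] max_def)
  qed
  define JT where "JT T y = (\<integral>\<^sup>+ t. indicator {y..T} t * ennreal (E y t) \<partial>lborel)" for T y
  have JTle: "JT T y \<le> ennreal (max 0 (T - y))" for T y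
  proof -
    have "JT T y \<le> (\<integral>\<^sup>+ t. indicator {y..T} t \<partial>lborel)"
      unfolding JT_def using E1 by (intro nn_integral_mono) (auto simp: indicator_def)
    also have "\<dots> = emeasure lborel {y..T}" by simp
    also have "\<dots> = ennreal (max 0 (T - y))" by (cases "y \<le> T") auto
    finally show ?thesis .
  qed
  have JTrec: "JT T y \<le> ennreal (z - y) + ennreal (exp (- Qf y z)) * JT T z" if yz: "y \<le> z" for T y z
  proof -
    have "JT T y \<le> (\<integral>\<^sup>+ t. indicator {y..z} t + ennreal (exp (- Qf y z)) * (indicator {z..T} t * ennreal (E z t)) \<partial>lborel)"
      unfolding JT_def
    proof (rule nn_integral_mono)
      fix t
      show "indicator {y..T} t * ennreal (E y t) \<le> indicator {y..z} t + ennreal (exp (- Qf y z)) * (indicator {z..T} t * ennreal (E z t))"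
      proof (cases "t \<in> {y..T}")
        case False then show ?thesis by simp
      next
        case True
        show ?thesis
        proof (cases "t \<le> z")
          case True
          then have "indicator {y..z} t = (1::ennreal)" using \<open>t \<in> {y..T}\<close> by simp
          moreover have "indicator {y..T} t * ennreal (E y t) \<le> 1" using E1[of y t] by (simp add: indicator_def)
          ultimately show ?thesis by (metis add_increasing2 zero_le)
        next
          case False
          then have tz: "z \<le> t" "t \<in> {z..T}" using \<open>t \<in> {y..T}\<close> by auto
          have "E y t = exp (- Qf y z) * E z t"
            using Qadd[OF yz tz(1)] yz tz(1) by (simp add: E_def max_def exp_add[symmetric])
          then have "indicator {y..T} t * ennreal (E y t) = ennreal (exp (- Qf y z)) * (indicator {z..T} t * ennreal (E z t))"
            using \<open>t \<in> {y..T}\<close> tz E0[of z t] by (simp add: ennreal_mult)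
          then show ?thesis by (simp add: add_increasing)
        qed
      qed
    qed
    also have "\<dots> = (\<integral>\<^sup>+ t. indicator {y..z} t \<partial>lborel) + (\<integral>\<^sup>+ t. ennreal (exp (- Qf y z)) * (indicator {z..T} t * ennreal (E z t)) \<partial>lborel)"
    proof (rule nn_integral_add)
      show "(\<lambda>t. ennreal (exp (- Qf y z)) * (indicator {z..T} t * ennreal (E z t))) \<in> borel_measurable lborel"
        using borel_measurable_times_ennreal[OF borel_measurable_const Imeas[of "{z..T}" z]] by simp
    qed simp
    finally have le: "JT T y \<le> (\<integral>\<^sup>+ t. indicator {y..z} t \<partial>lborel) + (\<integral>\<^sup>+ t. ennreal (exp (- Qf y z)) * (indicator {z..T} t * ennreal (E z t)) \<partial>lborel)" .
    have eqA: "(\<integral>\<^sup>+ t. ennreal (exp (- Qf y z)) * (indicator {z..T} t * ennreal (E z t)) \<partial>lborel) = ennreal (exp (- Qf y z)) * JT T z"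
      unfolding JT_def using Imeas[of "{z..T}" z] by (intro nn_integral_cmult) auto
    have eqB: "(\<integral>\<^sup>+ t. indicator {y..z} t \<partial>lborel) = ennreal (z - y)" using yz by simp
    show ?thesis using le unfolding eqA eqB .
  qed
  have JTsup: "J q y = (SUP n. JT (real n) y)" for y
  proof -
    have "J q y = (\<integral>\<^sup>+ t. (SUP n. indicator {y..real n} t * ennreal (E y t)) \<partial>lborel)"
      unfolding Jeq
    proof (rule nn_integral_cong)
      fix t
      show "indicator {y..} t * ennreal (E y t) = (SUP n. indicator {y..real n} t * ennreal (E y t))"
      proof (rule antisym)
        obtain n :: nat where "t \<le> real n" using real_arch_simple by blast
        then have "indicator {y..} t * ennreal (E y t) = indicator {y..real n} t * ennreal (E y t)"
          by (simp add: indicator_def)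
        moreover have "indicator {y..real n} t * ennreal (E y t) \<le> (SUP n. indicator {y..real n} t * ennreal (E y t))"
          by (rule SUP_upper) simp
        ultimately show "indicator {y..} t * ennreal (E y t) \<le> (SUP n. indicator {y..real n} t * ennreal (E y t))"
          by simp
        show "(SUP n. indicator {y..real n} t * ennreal (E y t)) \<le> indicator {y..} t * ennreal (E y t)"
        proof (rule SUP_least)
          fix n :: nat
          show "indicator {y..real n} t * ennreal (E y t) \<le> indicator {y..} t * ennreal (E y t)"
            by (cases "t \<in> {y..real n}") auto
        qed
      qed
    qed
    also have "\<dots> = (SUP n. JT (real n) y)"
      unfolding JT_def
    proof (rule nn_integral_monotone_convergence_SUP)
      show "incseq (\<lambda>n t. indicator {y..real n} t * ennreal (E y t))"
      proof (intro incseq_SucI le_funI)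
        fix n :: nat and t :: real
        show "indicator {y..real n} t * ennreal (E y t) \<le> indicator {y..real (Suc n)} t * ennreal (E y t)"
          by (cases "t \<in> {y..real n}") auto
      qed
    qed (rule Imeas; simp)
    finally show ?thesis .
  qed
  define F where "F T y = enn2real (JT T y)" for T y
  have JTfin: "JT T y < top" for T y using le_less_trans[OF JTle[of T y] ennreal_less_top] .
  have JTF: "JT T y = ennreal (F T y)" for T y unfolding F_def using JTfin[of T y] by (metis ennreal_enn2real less_top)
  have F0: "0 \<le> F T y" for T y unfolding F_def by simp
  have Fle: "F T y \<le> max 0 (T - y)" for T y
    using JTle[of T y] unfolding JTF by (subst (asm) ennreal_le_iff) auto
  have Frec: "F T y \<le> (z - y) + exp (- Qf y z) * F T z" if "y \<le> z" for T y z
  proof -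
    have eq: "ennreal (z - y) + ennreal (exp (- Qf y z)) * ennreal (F T z) = ennreal ((z - y) + exp (- Qf y z) * F T z)"
      using that F0[of T z] by (simp add: ennreal_mult ennreal_plus)
    have "ennreal (F T y) \<le> ennreal ((z - y) + exp (- Qf y z) * F T z)"
      using JTrec[OF that, of T] unfolding JTF eq .
    then show ?thesis using that F0[of T z] by (subst (asm) ennreal_le_iff) auto
  qed
  have exp2: "exp (-2::real) \<le> 1/3"
  proof -
    have "3 \<le> exp (2::real)" using exp_ge_add_one_self[of 2] by simp
    then show ?thesis by (simp add: exp_minus field_simps)
  qed
  have Rpos: "0 < R" using R1 by simp
  have step: "F T y * q1 y \<le> H + F T (y + H / q1 y) * q1 (y + H / q1 y) / 2" if yR: "R \<le> \<bar>y\<bar>" for T y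
  proof -
    define y' where "y' = y + H / q1 y"
    have q1y: "0 < q1 y" using q1_pos by simp
    have yy': "y \<le> y'" using H3 q1y by (simp add: y'_def)
    have y'le: "y' \<le> y + H / q1 y" by (simp add: y'_def)
    have "2/3 * q1 y * (y' - y) - K \<le> integral {y..y'} q" using intb[OF yR yy' y'le] by blast
    moreover have "2/3 * q1 y * (y' - y) = K + 2" using q1y by (simp add: y'_def H_def)
    ultimately have "K + 2 - K \<le> Qf y y'" unfolding Qf_def by linarith
    then have Q2: "2 \<le> Qf y y'" by simp
    have ex: "exp (- Qf y y') \<le> 1/3" using Q2 exp2 by (meson exp_le_cancel_iff neg_le_iff_le order_trans)
    have cq: "q1 y \<le> 3/2 * q1 y'" using comp[OF yR yy' y'le] by simp
    have "F T y \<le> (y' - y) + exp (- Qf y y') * F T y'" using Frec[OF yy'] .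
    then have "F T y * q1 y \<le> ((y' - y) + exp (- Qf y y') * F T y') * q1 y" using q1y by (intro mult_right_mono) auto
    also have "\<dots> = H + exp (- Qf y y') * F T y' * q1 y" using q1y by (simp add: y'_def algebra_simps)
    also have "\<dots> \<le> H + (1/3) * F T y' * (3/2 * q1 y')"
      using ex cq F0[of T y'] q1y by (intro add_left_mono mult_mono) auto
    also have "\<dots> = H + F T y' * q1 y' / 2" by simp
    finally show ?thesis by (simp add: y'_def)
  qed
  define Z where "Z T y = F T (y + H / q1 y) * q1 (y + H / q1 y)" for T y
  have H0: "0 \<le> H" using H3 by simp
  have st1: "F T y * q1 y \<le> 2 * H" if yR: "R \<le> y" for T y
  proof (cases "y \<le> T")
    case False
    then have "F T y = 0" using Fle[of T y] F0[of T y] by simp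
    then show ?thesis using H0 by simp
  next
    case True
    obtain xm where xm: "xm \<in> {R..T}" "\<forall>z\<in>{R..T}. q1 z \<le> q1 xm"
      using continuous_attains_sup[of "{R..T}" q1] True yR continuous_on_subset[OF q1c] by auto
    have "F T y * q1 y \<le> 2 * H + 0"
    proof (rule sup_trick[where S="{R..T}" and m="\<lambda>y. F T y * q1 y" and B="(T - R) * q1 xm" and H=H and Z="Z T" and C=0])
      fix z assume z: "z \<in> {R..T}"
      have "F T z \<le> T - R" using Fle[of T z] z by auto
      then show "F T z * q1 z \<le> (T - R) * q1 xm" using xm z F0[of T z] q1_pos[of z] by (intro mult_mono) auto
    next
      fix z assume z: "z \<in> {R..T}"
      then have "R \<le> \<bar>z\<bar>" using Rpos by auto
      then show "F T z * q1 z \<le> H + Z T z / 2" using step unfolding Z_def by blast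
    next
      fix z assume z: "z \<in> {R..T}"
      show "Z T z \<le> 0 \<or> (\<exists>w\<in>{R..T}. Z T z \<le> F T w * q1 w)"
      proof (cases "z + H / q1 z \<le> T")
        case True
        have "z \<le> z + H / q1 z" using H0 q1_pos[of z] by simp
        then have "z + H / q1 z \<in> {R..T}" using z True by auto
        then show ?thesis unfolding Z_def by blast
      next
        case False
        then have "F T (z + H / q1 z) = 0" using Fle[of T "z + H / q1 z"] F0[of T "z + H / q1 z"] by simp
        then show ?thesis unfolding Z_def by simp
      qed
    qed (use H0 yR True in auto)
    then show ?thesis by simp
  qed
  obtain xM0 where xM0: "xM0 \<in> {-R..R}" "\<forall>z\<in>{-R..R}. q1 z \<le> q1 xM0"
    using continuous_attains_sup[of "{-R..R}" q1] Rpos continuous_on_subset[OF q1c] by auto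
  define C0 where "C0 = (2 * R + 2 * H / q1 R) * q1 xM0"
  have C00: "0 \<le> C0" unfolding C0_def using Rpos H0 q1_pos[of R] q1_pos[of xM0] by simp
  have st2: "F T y * q1 y \<le> C0" if y: "-R \<le> y" "y \<le> R" for T y
  proof -
    have "F T y \<le> (R - y) + exp (- Qf y R) * F T R" using Frec[OF y(2)] .
    also have "\<dots> \<le> (R - y) + 1 * F T R" using Qnn[of y R] F0[of T R] by (intro add_left_mono mult_right_mono) auto
    finally have a: "F T y \<le> 2 * R + F T R" using y by simp
    have "F T R * q1 R \<le> 2 * H" using st1[of R T] by simp
    then have "F T R \<le> 2 * H / q1 R" using q1_pos[of R] by (simp add: field_simps)
    with a have "F T y \<le> 2 * R + 2 * H / q1 R" by simp
    moreover have "q1 y \<le> q1 xM0" using xM0 y by auto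
    ultimately show ?thesis unfolding C0_def using F0[of T y] q1_pos[of y] by (intro mult_mono) auto
  qed
  define C1 where "C1 = 2 * H + C0"
  have st12: "F T y * q1 y \<le> C1" if y: "-R \<le> y" for T y
  proof (cases "y \<le> R")
    case True then show ?thesis using st2[OF y True, of T] H0 by (simp add: C1_def)
  next
    case False then show ?thesis using st1[of y T] C00 by (simp add: C1_def)
  qed
  define Cup where "Cup = 2 * H + C1"
  have st3: "F T y * q1 y \<le> Cup" for T y
  proof (cases "-R \<le> y")
    case True then show ?thesis using st12[OF True, of T] H0 by (simp add: Cup_def)
  next
    case False
    then have yR: "y \<le> -R" by simp
    obtain xm where xm: "xm \<in> {y..-R}" "\<forall>z\<in>{y..-R}. q1 z \<le> q1 xm"
      using continuous_attains_sup[of "{y..-R}" q1] yR continuous_on_subset[OF q1c] by auto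
    have C10: "0 \<le> C1" using H0 C00 by (simp add: C1_def)
    show ?thesis unfolding Cup_def
    proof (rule sup_trick[where S="{y..-R}" and m="\<lambda>y. F T y * q1 y" and B="max 0 (T - y) * q1 xm" and H=H and Z="Z T" and C=C1])
      fix z assume z: "z \<in> {y..-R}"
      have "F T z \<le> max 0 (T - y)" using Fle[of T z] z by auto
      then show "F T z * q1 z \<le> max 0 (T - y) * q1 xm" using xm z F0[of T z] q1_pos[of z] by (intro mult_mono) auto
    next
      fix z assume z: "z \<in> {y..-R}"
      then have "R \<le> \<bar>z\<bar>" using Rpos by auto
      then show "F T z * q1 z \<le> H + Z T z / 2" using step unfolding Z_def by blast
    next
      fix z assume z: "z \<in> {y..-R}"
      have zz: "z \<le> z + H / q1 z" using H0 q1_pos[of z] by simp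
      show "Z T z \<le> C1 \<or> (\<exists>w\<in>{y..-R}. Z T z \<le> F T w * q1 w)"
      proof (cases "z + H / q1 z \<le> -R")
        case True
        then have "z + H / q1 z \<in> {y..-R}" using z zz by auto
        then show ?thesis unfolding Z_def by blast
      next
        case False
        then show ?thesis unfolding Z_def using st12[of "z + H / q1 z" T] by simp
      qed
    qed (use H0 C10 yR in auto)
  qed
  have upper: "J q y \<le> ennreal (Cup / q1 y)" for y
  proof -
    have "JT (real n) y \<le> ennreal (Cup / q1 y)" for n
    proof -
      have "F (real n) y \<le> Cup / q1 y" using st3[of "real n" y] q1_pos[of y] by (simp add: field_simps)
      then show ?thesis unfolding JTF by (rule ennreal_leI)
    qed
    then show ?thesis unfolding JTsup by (rule SUP_least)
  qed
  have low1: "ennreal (exp (- (2 + 3 * K)) * (1 / q1 y)) \<le> J q y" if yR: "R \<le> \<bar>y\<bar>" for y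
  proof -
    have q1y: "0 < q1 y" using q1_pos by simp
    have "ennreal (exp (- (2 + 3 * K)) * (1 / q1 y)) = ennreal (exp (- (2 + 3 * K))) * emeasure lborel {y..y + 1 / q1 y}"
    proof -
      have m1: "emeasure lborel {y..y + 1 / q1 y} = ennreal (1 / q1 y)" using q1y by simp
      have "ennreal (exp (- (2 + 3 * K)) * (1 / q1 y)) = ennreal (exp (- (2 + 3 * K))) * ennreal (1 / q1 y)"
        using q1y by (intro ennreal_mult) auto
      then show ?thesis unfolding m1 .
    qed
    also have "\<dots> = (\<integral>\<^sup>+ t. ennreal (exp (- (2 + 3 * K))) * indicator {y..y + 1 / q1 y} t \<partial>lborel)"
      by (rule nn_integral_cmult_indicator[symmetric]) simp
    also have "\<dots> \<le> (\<integral>\<^sup>+ t. indicator {y..} t * ennreal (E y t) \<partial>lborel)"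
    proof (rule nn_integral_mono)
      fix t
      show "ennreal (exp (- (2 + 3 * K))) * indicator {y..y + 1 / q1 y} t \<le> indicator {y..} t * ennreal (E y t)"
      proof (cases "t \<in> {y..y + 1 / q1 y}")
        case False then show ?thesis by simp
      next
        case True
        then have t: "y \<le> t" "t \<le> y + 1 / q1 y" by auto
        have "1 / q1 y \<le> H / q1 y" using H3 q1y by (intro divide_right_mono) auto
        then have t2: "t \<le> y + H / q1 y" using t by simp
        have "integral {y..t} q \<le> 2 * q1 y * (t - y) + 3 * K" using intb[OF yR t(1) t2] by blast
        moreover have "2 * q1 y * (t - y) \<le> 2 * q1 y * (1 / q1 y)" using t q1y by (intro mult_left_mono) auto
        ultimately have "Qf y t \<le> 2 + 3 * K" using q1y by (simp add: Qf_def)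
        then have "exp (- (2 + 3 * K)) \<le> E y t" using t by (simp add: E_def max_def)
        then show ?thesis using True t by (simp add: ennreal_leI)
      qed
    qed
    finally show ?thesis unfolding Jeq .
  qed
  define W where "W = Qf (-R) (R + 1)"
  have low2: "ennreal (exp (- W)) \<le> J q y" if y: "-R \<le> y" "y \<le> R" for y
  proof -
    have "ennreal (exp (- W)) = ennreal (exp (- W)) * emeasure lborel {y..y + 1}" by simp
    also have "\<dots> = (\<integral>\<^sup>+ t. ennreal (exp (- W)) * indicator {y..y + 1} t \<partial>lborel)"
      by (rule nn_integral_cmult_indicator[symmetric]) simp
    also have "\<dots> \<le> (\<integral>\<^sup>+ t. indicator {y..} t * ennreal (E y t) \<partial>lborel)"
    proof (rule nn_integral_mono)
      fix t
      show "ennreal (exp (- W)) * indicator {y..y + 1} t \<le> indicator {y..} t * ennreal (E y t)"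
      proof (cases "t \<in> {y..y + 1}")
        case False then show ?thesis by simp
      next
        case True
        then have t: "y \<le> t" "t \<le> y + 1" by auto
        have "Qf y t \<le> W" unfolding Qf_def W_def
          using t y q_nonneg by (intro integral_subset_le qI) auto
        then have "exp (- W) \<le> E y t" using t by (simp add: E_def max_def)
        then show ?thesis using True t by (simp add: ennreal_leI)
      qed
    qed
    finally show ?thesis unfolding Jeq .
  qed
  obtain xm0 where xm0: "xm0 \<in> {-R..R}" "\<forall>z\<in>{-R..R}. q1 xm0 \<le> q1 z"
    using continuous_attains_inf[of "{-R..R}" q1] Rpos continuous_on_subset[OF q1c] by auto
  define qm where "qm = q1 xm0"
  have qm: "0 < qm" using q1_pos by (simp add: qm_def)
  define c where "c = max Cup (max (exp (2 + 3 * K)) (exp W / qm)) + 1"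
  have cpos: "0 < c"
  proof -
    have "exp (2 + 3 * K) \<le> max Cup (max (exp (2 + 3 * K)) (exp W / qm))" by simp
    moreover have "0 < exp (2 + 3 * K)" by simp
    ultimately show ?thesis unfolding c_def by linarith
  qed
  have c1: "Cup \<le> c" "exp (2 + 3 * K) \<le> c" "exp W / qm \<le> c" unfolding c_def by auto
  show ?thesis
  proof (intro exI[of _ c] conjI allI cpos)
    fix x
    have q1x: "0 < q1 x" using q1_pos by simp
    have "Cup / q1 x \<le> c / q1 x" using c1(1) q1x by (intro divide_right_mono) auto
    then show "J q x \<le> ennreal (c / q1 x)" using upper[of x] by (meson ennreal_leI order_trans)
    show "ennreal (1 / (c * q1 x)) \<le> J q x"
    proof (cases "R \<le> \<bar>x\<bar>")
      case True
      have "1 / c \<le> 1 / exp (2 + 3 * K)" using c1(2) cpos by (intro divide_left_mono) auto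
      also have "\<dots> = exp (- (2 + 3 * K))" by (metis exp_minus inverse_eq_divide)
      finally have "1 / c \<le> exp (- (2 + 3 * K))" .
      then have "1 / (c * q1 x) \<le> exp (- (2 + 3 * K)) * (1 / q1 x)"
        using q1x by (simp add: field_simps)
      then show ?thesis using low1[OF True] by (meson ennreal_leI order_trans)
    next
      case False
      then have x: "-R \<le> x" "x \<le> R" by auto
      have "qm \<le> q1 x" using xm0 x by (auto simp: qm_def)
      then have "c * qm \<le> c * q1 x" using cpos by simp
      moreover have "exp W \<le> c * qm" using c1(3) qm by (simp add: field_simps)
      ultimately have "exp W \<le> c * q1 x" by simp
      then have "1 / (c * q1 x) \<le> 1 / exp W" using cpos q1x by (intro divide_left_mono) auto
      also have "\<dots> = exp (- W)" by (metis exp_minus inverse_eq_divide)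
      finally have "1 / (c * q1 x) \<le> exp (- W)" .
      then show ?thesis using low2[OF x] by (meson ennreal_leI order_trans)
    qed
  qed
qed

end
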